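(* Let $\boldsymbol\mu=(\mu^{(1)},\ldots,\mu^{(n)})$ be an $I$-tuple of partitions, not all zero, where $\mu^{(i)}$ has $m_a^{(i)}$ rows of length $a$. Put $R(\mu^{(i)})=\{(a,u)\mid a>0,\ 1\le u\le m_a^{(i)}\}$, totally ordered lexicographically, and $$P(\boldsymbol\mu)=2\sum_{i\in I}\sum_{\substack{(a,u),(b,v)\in R(\mu^{(i)})\\(a,u)<(b,v)}}\min\{a,b\}-\sum_{i<j}\sum_{\substack{(a,u)\in R(\mu^{(i)})\\(b,v)\in R(\mu^{(j)})}}\min\{|c_{ji}|a,|c_{ij}|b\}.$$ Then $P(\boldsymbol\mu)>-\sum_{i\in I}|\mu^{(i)}|$.
   Context: $(c_{ij})_{i,j\in I}$, $I=\{1,\dots,n\}$, is the Cartan matrix of a complex simple Lie algebra (finite type), with $I$ ordered naturally; $|\mu|$ is the size of a partition $\mu$. *)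

theory Defs
  imports Complex_Main
begin

text \<open>Index set I = {1..n}; a matrix is a function c :: nat => nat => int (only entries
  with indices in {1..n} matter).\<close>

definition generalized_cartan :: "nat \<Rightarrow> (nat \<Rightarrow> nat \<Rightarrow> int) \<Rightarrow> bool" where
  "generalized_cartan n c \<longleftrightarrow>
     (\<forall>i\<in>{1..n}. c i i = 2) \<and>
     (\<forall>i\<in>{1..n}. \<forall>j\<in>{1..n}. i \<noteq> j \<longrightarrow> c i j \<le> 0 \<and> (c i j = 0 \<longleftrightarrow> c j i = 0))"

definition indecomposable_matrix :: "nat \<Rightarrow> (nat \<Rightarrow> nat \<Rightarrow> int) \<Rightarrow> bool" where
  "indecomposable_matrix n c \<longleftrightarrow>
     (\<forall>J. J \<subseteq> {1..n} \<and> J \<noteq> {} \<and> J \<noteq> {1..n} \<longrightarrow>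
        (\<exists>i\<in>J. \<exists>j\<in>{1..n} - J. c i j \<noteq> 0))"

text \<open>Cartan matrix of a complex simple Lie algebra (finite type): an indecomposable
  generalized Cartan matrix which is symmetrizable, D c symmetric with D positive diagonal,
  and D c positive definite.\<close>

definition simple_cartan_matrix :: "nat \<Rightarrow> (nat \<Rightarrow> nat \<Rightarrow> int) \<Rightarrow> bool" where
  "simple_cartan_matrix n c \<longleftrightarrow>
     n \<ge> 1 \<and> generalized_cartan n c \<and> indecomposable_matrix n c \<and>
     (\<exists>d :: nat \<Rightarrow> real.
        (\<forall>i\<in>{1..n}. d i > 0) \<and>
        (\<forall>i\<in>{1..n}. \<forall>j\<in>{1..n}. d i * of_int (c i j) = d j * of_int (c j i)) \<and>
        (\<forall>x :: nat \<Rightarrow> real. (\<exists>i\<in>{1..n}. x i \<noteq> 0) \<longrightarrow>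
           (\<Sum>i\<in>{1..n}. \<Sum>j\<in>{1..n}. x i * d i * of_int (c i j) * x j) > 0))"

text \<open>An I-tuple of partitions is given by multiplicities: m i a = number of rows of
  length a (a > 0) of the partition mu^(i).\<close>

definition partition_tuple :: "nat \<Rightarrow> (nat \<Rightarrow> nat \<Rightarrow> nat) \<Rightarrow> bool" where
  "partition_tuple n m \<longleftrightarrow> (\<forall>i\<in>{1..n}. m i 0 = 0 \<and> finite {a. m i a \<noteq> 0})"

definition psize :: "(nat \<Rightarrow> nat \<Rightarrow> nat) \<Rightarrow> nat \<Rightarrow> nat" where
  "psize m i = (\<Sum>a\<in>{a. 0 < a \<and> m i a \<noteq> 0}. a * m i a)"

definition rowset :: "(nat \<Rightarrow> nat \<Rightarrow> nat) \<Rightarrow> nat \<Rightarrow> (nat \<times> nat) set" where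
  "rowset m i = {(a, u). 0 < a \<and> 1 \<le> u \<and> u \<le> m i a}"

definition lex_less :: "nat \<times> nat \<Rightarrow> nat \<times> nat \<Rightarrow> bool" where
  "lex_less p q \<longleftrightarrow> fst p < fst q \<or> (fst p = fst q \<and> snd p < snd q)"

definition Pfun :: "nat \<Rightarrow> (nat \<Rightarrow> nat \<Rightarrow> int) \<Rightarrow> (nat \<Rightarrow> nat \<Rightarrow> nat) \<Rightarrow> int" where
  "Pfun n c m =
     2 * (\<Sum>i\<in>{1..n}. \<Sum>pq\<in>{(p, q). p \<in> rowset m i \<and> q \<in> rowset m i \<and> lex_less p q}.
            int (min (fst (fst pq)) (fst (snd pq))))
     - (\<Sum>i\<in>{1..n}. \<Sum>j\<in>{i<..n}. \<Sum>p\<in>rowset m i. \<Sum>q\<in>rowset m j.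
            min (\<bar>c j i\<bar> * int (fst p)) (\<bar>c i j\<bar> * int (fst q)))"

end

theory Submission imports Defs begin
lemma group_count:
  fixes g :: "nat \<Rightarrow> real"
  assumes "finite X" "\<forall>e\<in>X. v e \<in> {1..n}"
  shows "(\<Sum>e\<in>X. g (v e)) = (\<Sum>i\<in>{1..n}. real (card {e\<in>X. v e = i}) * g i)"
proof -
  have "(\<Sum>e\<in>X. g (v e)) = (\<Sum>i\<in>{1..n}. \<Sum>e\<in>{e\<in>X. v e = i}. g (v e))"
    by (rule sum.group[symmetric]) (use assms in auto)
  also have "\<dots> = (\<Sum>i\<in>{1..n}. real (card {e\<in>X. v e = i}) * g i)"
    by (rule sum.cong) auto
  finally show ?thesis .
qed

lemma minform_pos:
  fixes v :: "'e \<Rightarrow> nat" and B :: "nat \<Rightarrow> nat \<Rightarrow> real"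
  assumes pd: "\<forall>z::nat\<Rightarrow>real. (\<exists>i\<in>{1..n}. z i \<noteq> 0) \<longrightarrow> (\<Sum>i\<in>{1..n}. \<Sum>j\<in>{1..n}. z i * B i j * z j) > 0"
  shows "finite X \<Longrightarrow> \<forall>e\<in>X. v e \<in> {1..n} \<Longrightarrow> \<forall>e\<in>X. x e > 0 \<Longrightarrow>
     (\<Sum>e\<in>X. \<Sum>f\<in>X. B (v e) (v f) * min (x e) (x f)) \<ge> 0 \<and>
     (X \<noteq> {} \<longrightarrow> (\<Sum>e\<in>X. \<Sum>f\<in>X. B (v e) (v f) * min (x e) (x f)) > 0)"
proof (induction X arbitrary: x rule: finite_psubset_induct)
  case (psubset X)
  show ?case
  proof (cases "X = {}")
    case True then show ?thesis by simp
  next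
    case ne: False
    define t0 where "t0 = Min (x ` X)"
    have t0pos: "t0 > 0" using ne psubset.prems psubset.hyps unfolding t0_def by auto
    have t0le: "\<And>e. e \<in> X \<Longrightarrow> t0 \<le> x e" unfolding t0_def using psubset.hyps by auto
    have "t0 \<in> x ` X" unfolding t0_def using Min_in[of "x ` X"] psubset.hyps ne by auto
    then obtain e0 where e0: "e0 \<in> X" "x e0 = t0" by auto
    define X' where "X' = {e\<in>X. x e > t0}"
    define x' where "x' = (\<lambda>e. x e - t0)"
    have sub: "X' \<subset> X" using e0 unfolding X'_def by auto
    have IH: "(\<Sum>e\<in>X'. \<Sum>f\<in>X'. B (v e) (v f) * min (x' e) (x' f)) \<ge> 0"
      using psubset.IH[OF sub, of x'] psubset.prems sub unfolding X'_def x'_def by auto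
    have split: "\<And>e f. e \<in> X \<Longrightarrow> f \<in> X \<Longrightarrow> B (v e) (v f) * min (x e) (x f) =
       t0 * B (v e) (v f) + (if e \<in> X' \<and> f \<in> X' then B (v e) (v f) * min (x' e) (x' f) else 0)"
    proof -
      fix e f assume "e \<in> X" "f \<in> X"
      then have "t0 \<le> x e" "t0 \<le> x f" by (auto intro: t0le)
      then show "B (v e) (v f) * min (x e) (x f) =
       t0 * B (v e) (v f) + (if e \<in> X' \<and> f \<in> X' then B (v e) (v f) * min (x' e) (x' f) else 0)"
        unfolding X'_def x'_def using \<open>e \<in> X\<close> \<open>f \<in> X\<close>
        by (auto simp: min_def algebra_simps)
    qed
    have "(\<Sum>e\<in>X. \<Sum>f\<in>X. B (v e) (v f) * min (x e) (x f)) =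
       (\<Sum>e\<in>X. \<Sum>f\<in>X. t0 * B (v e) (v f) + (if e \<in> X' \<and> f \<in> X' then B (v e) (v f) * min (x' e) (x' f) else 0))"
      using split by (intro sum.cong refl) auto
    also have "\<dots> = t0 * (\<Sum>e\<in>X. \<Sum>f\<in>X. B (v e) (v f)) +
        (\<Sum>e\<in>X. \<Sum>f\<in>X. (if e \<in> X' \<and> f \<in> X' then B (v e) (v f) * min (x' e) (x' f) else 0))"
      by (simp add: sum.distrib sum_distrib_left)
    also have "(\<Sum>e\<in>X. \<Sum>f\<in>X. (if e \<in> X' \<and> f \<in> X' then B (v e) (v f) * min (x' e) (x' f) else 0))
       = (\<Sum>e\<in>X'. \<Sum>f\<in>X'. B (v e) (v f) * min (x' e) (x' f))"
    proof -
      have "(\<Sum>e\<in>X. \<Sum>f\<in>X. (if e \<in> X' \<and> f \<in> X' then B (v e) (v f) * min (x' e) (x' f) else 0))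
        = (\<Sum>e\<in>X. if e \<in> X' then (\<Sum>f\<in>X'. B (v e) (v f) * min (x' e) (x' f)) else 0)"
        using sub psubset.hyps by (intro sum.cong refl) (auto simp: sum.If_cases Int_absorb1)
      also have "\<dots> = (\<Sum>e\<in>X'. \<Sum>f\<in>X'. B (v e) (v f) * min (x' e) (x' f))"
        using sub psubset.hyps by (simp add: sum.If_cases Int_absorb1)
      finally show ?thesis .
    qed
    also have "(\<Sum>e\<in>X. \<Sum>f\<in>X. B (v e) (v f)) =
       (\<Sum>i\<in>{1..n}. \<Sum>j\<in>{1..n}. real (card {e\<in>X. v e = i}) * B i j * real (card {e\<in>X. v e = j}))"
    proof -
      have "(\<Sum>e\<in>X. \<Sum>f\<in>X. B (v e) (v f)) = (\<Sum>e\<in>X. \<Sum>j\<in>{1..n}. real (card {e\<in>X. v e = j}) * B (v e) j)"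
        using group_count[OF psubset.hyps psubset.prems(1)] by (intro sum.cong refl) (rule group_count[OF psubset.hyps psubset.prems(1)])
      also have "\<dots> = (\<Sum>i\<in>{1..n}. real (card {e\<in>X. v e = i}) * (\<Sum>j\<in>{1..n}. real (card {e\<in>X. v e = j}) * B i j))"
        by (rule group_count[OF psubset.hyps psubset.prems(1)])
      finally show ?thesis by (simp add: sum_distrib_left mult_ac)
    qed
    finally have eq: "(\<Sum>e\<in>X. \<Sum>f\<in>X. B (v e) (v f) * min (x e) (x f)) =
       t0 * (\<Sum>i\<in>{1..n}. \<Sum>j\<in>{1..n}. real (card {e\<in>X. v e = i}) * B i j * real (card {e\<in>X. v e = j}))
       + (\<Sum>e\<in>X'. \<Sum>f\<in>X'. B (v e) (v f) * min (x' e) (x' f))" .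
    have "card {e\<in>X. v e = v e0} \<noteq> 0" using e0 psubset.hyps by auto
    moreover have "v e0 \<in> {1..n}" using e0 psubset.prems by auto
    ultimately have "\<exists>i\<in>{1..n}. real (card {e\<in>X. v e = i}) \<noteq> 0" by (intro bexI[of _ "v e0"]) auto
    then have "(\<Sum>i\<in>{1..n}. \<Sum>j\<in>{1..n}. real (card {e\<in>X. v e = i}) * B i j * real (card {e\<in>X. v e = j})) > 0"
      by (rule pd[rule_format, of "\<lambda>i. real (card {e\<in>X. v e = i})"])
    then have "(\<Sum>e\<in>X. \<Sum>f\<in>X. B (v e) (v f) * min (x e) (x f)) > 0"
      using eq IH t0pos by (simp add: add_pos_nonneg)
    then show ?thesis by simp
  qed
qed

lemma pair_split:
  fixes g :: "nat \<Rightarrow> nat \<Rightarrow> real"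
  shows "(\<Sum>i\<in>{1..n}. \<Sum>j\<in>{1..n}. g i j) = (\<Sum>i\<in>{1..n}. g i i) + (\<Sum>i\<in>{1..n}. \<Sum>j\<in>{i<..n}. g i j + g j i)"
proof (induction n)
  case 0 then show ?case by simp
next
  case (Suc n)
  have e: "\<And>i. i \<in> {1..n} \<Longrightarrow> {i<..Suc n} = insert (Suc n) {i<..n}" by auto
  have "(\<Sum>i\<in>{1..Suc n}. \<Sum>j\<in>{i<..Suc n}. g i j + g j i) =
     (\<Sum>i\<in>{1..n}. \<Sum>j\<in>{i<..Suc n}. g i j + g j i)"
    by (simp add: atLeastAtMostSuc_conv)
  also have "\<dots> = (\<Sum>i\<in>{1..n}. (g i (Suc n) + g (Suc n) i) + (\<Sum>j\<in>{i<..n}. g i j + g j i))"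
    by (intro sum.cong refl) (simp add: e)
  finally have r: "(\<Sum>i\<in>{1..Suc n}. \<Sum>j\<in>{i<..Suc n}. g i j + g j i) = 
      (\<Sum>i\<in>{1..n}. g i (Suc n)) + (\<Sum>i\<in>{1..n}. g (Suc n) i) + (\<Sum>i\<in>{1..n}. \<Sum>j\<in>{i<..n}. g i j + g j i)"
    by (simp add: sum.distrib)
  have L: "(\<Sum>i\<in>{1..Suc n}. \<Sum>j\<in>{1..Suc n}. g i j) = (\<Sum>i\<in>{1..n}. \<Sum>j\<in>{1..n}. g i j) + (\<Sum>i\<in>{1..n}. g i (Suc n)) + (\<Sum>i\<in>{1..n}. g (Suc n) i) + g (Suc n) (Suc n)"
    by (simp add: atLeastAtMostSuc_conv sum.distrib)
  have R1: "(\<Sum>i\<in>{1..Suc n}. g i i) = (\<Sum>i\<in>{1..n}. g i i) + g (Suc n) (Suc n)"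
    by (simp add: atLeastAtMostSuc_conv)
  show ?case unfolding L R1 r Suc.IH by simp
qed

lemma pt:
  fixes di dj cij cji a b :: real
  assumes "di > 0" "dj > 0" "di * cij = dj * cji" "cij \<le> 0" "cji \<le> 0"
  shows "(cij / dj) * min (di * a) (dj * b) = - min (\<bar>cji\<bar> * a) (\<bar>cij\<bar> * b)"
proof -
  define k where "k = - cij / dj"
  have k0: "k \<ge> 0" unfolding k_def using assms by (simp add: divide_nonpos_pos)
  have k1: "k * di = \<bar>cji\<bar>" unfolding k_def using assms
    by (simp add: field_simps)
  have k2: "k * dj = \<bar>cij\<bar>" unfolding k_def using assms by simp
  have "k * min (di * a) (dj * b) = min (k * di * a) (k * dj * b)"
    using k0 by (simp add: min_mult_distrib_left mult.assoc)
  then have "k * min (di * a) (dj * b) = min (\<bar>cji\<bar> * a) (\<bar>cij\<bar> * b)" using k1 k2 by simp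
  moreover have "(cij / dj) = - k" unfolding k_def by simp
  ultimately show ?thesis by simp
qed
lemma lex_irrefl: "\<not> lex_less p p" by (simp add: lex_less_def)
lemma lex_asym: "lex_less p q \<Longrightarrow> \<not> lex_less q p" by (auto simp add: lex_less_def)
lemma lex_total: "p \<noteq> q \<Longrightarrow> lex_less p q \<or> lex_less q p"
  by (cases p; cases q) (auto simp add: lex_less_def)

lemma diag:
  fixes R :: "(nat \<times> nat) set"
  assumes fin: "finite R"
  shows "(\<Sum>p\<in>R. \<Sum>q\<in>R. min (fst p) (fst q)) =
    2 * (\<Sum>pq\<in>{(p, q). p \<in> R \<and> q \<in> R \<and> lex_less p q}. min (fst (fst pq)) (fst (snd pq))) + (\<Sum>p\<in>R. fst p)"
proof -
  define f where "f = (\<lambda>pq :: (nat\<times>nat)\<times>(nat\<times>nat). min (fst (fst pq)) (fst (snd pq)))"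
  define L where "L = {(p, q). p \<in> R \<and> q \<in> R \<and> lex_less p q}"
  define L' where "L' = {(p, q). p \<in> R \<and> q \<in> R \<and> lex_less q p}"
  define D where "D = (\<lambda>p. (p, p)) ` R"
  have RR: "R \<times> R = L \<union> (L' \<union> D)"
  proof (intro equalityI subsetI)
    fix pq assume "pq \<in> R \<times> R"
    then obtain p q where pq: "pq = (p, q)" "p \<in> R" "q \<in> R" by auto
    show "pq \<in> L \<union> (L' \<union> D)"
    proof (cases "p = q")
      case True then show ?thesis unfolding D_def using pq by auto
    next
      case False then show ?thesis unfolding L_def L'_def using pq lex_total[OF False] by auto
    qed
  qed (auto simp: L_def L'_def D_def)
  have finRR: "finite (R \<times> R)" using fin by simp
  have fL: "finite L" "finite L'" "finite D"
    using finite_subset[OF _ finRR] RR by auto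
  have d1: "L \<inter> (L' \<union> D) = {}" unfolding L_def L'_def D_def using lex_asym lex_irrefl by auto
  have d2: "L' \<inter> D = {}" unfolding L'_def D_def using lex_irrefl by auto
  have "(\<Sum>p\<in>R. \<Sum>q\<in>R. min (fst p) (fst q)) = sum f (R \<times> R)"
    unfolding f_def by (simp add: sum.cartesian_product split_def)
  also have "\<dots> = sum f L + (sum f L' + sum f D)"
    unfolding RR using fL d1 d2 by (simp add: sum.union_disjoint)
  also have "sum f L' = sum f L"
    by (rule sum.reindex_bij_witness[where i="\<lambda>(p,q). (q,p)" and j="\<lambda>(p,q). (q,p)"])
       (auto simp: L_def L'_def f_def min.commute)
  also have "sum f D = (\<Sum>p\<in>R. fst p)"
    unfolding D_def by (subst sum.reindex) (auto simp: inj_on_def f_def)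
  finally show ?thesis unfolding f_def L_def by simp
qed

lemma rowset_Sigma: "rowset m i = Sigma {a. 0 < a \<and> m i a \<noteq> 0} (\<lambda>a. {1..m i a})"
  unfolding rowset_def by auto

lemma rowset_finite: "finite {a. m i a \<noteq> 0} \<Longrightarrow> finite (rowset m i)"
  unfolding rowset_Sigma by (rule finite_SigmaI) auto

lemma psize_eq: "finite {a. m i a \<noteq> 0} \<Longrightarrow> psize m i = (\<Sum>p\<in>rowset m i. fst p)"
proof -
  assume f: "finite {a. m i a \<noteq> 0}"
  have "(\<Sum>p\<in>rowset m i. fst p) = (\<Sum>(a,u)\<in>Sigma {a. 0 < a \<and> m i a \<noteq> 0} (\<lambda>a. {1..m i a}). a)"
    unfolding rowset_Sigma by (simp add: split_def)
  also have "\<dots> = (\<Sum>a\<in>{a. 0 < a \<and> m i a \<noteq> 0}. \<Sum>u\<in>{1..m i a}. a)"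
    by (rule sum.Sigma[symmetric]) (use f in auto)
  finally show ?thesis unfolding psize_def by (simp add: mult.commute)
qed

lemma of_int_min_real: "real_of_int (min x y) = min (real_of_int x) (real_of_int y)"
  by (simp add: min_def)

lemma sum_Sigma':
  assumes "finite A" "\<forall>a\<in>A. finite (B a)"
  shows "(\<Sum>e\<in>Sigma A B. h e) = (\<Sum>a\<in>A. \<Sum>b\<in>B a. h (a, b))"
proof -
  have "(\<Sum>a\<in>A. \<Sum>b\<in>B a. h (a, b)) = (\<Sum>(a,b)\<in>Sigma A B. h (a, b))"
    by (rule sum.Sigma) (use assms in auto)
  then show ?thesis by (simp add: split_def)
qed

theorem lemmaA4:
  fixes n :: nat and c :: "nat \<Rightarrow> nat \<Rightarrow> int" and m :: "nat \<Rightarrow> nat \<Rightarrow> nat"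
  assumes "simple_cartan_matrix n c"
    and "partition_tuple n m"
    and "\<exists>i\<in>{1..n}. \<exists>a. m i a \<noteq> 0"
  shows "Pfun n c m > - (\<Sum>i\<in>{1..n}. int (psize m i))"
proof -
  obtain d :: "nat \<Rightarrow> real" where dpos: "\<forall>i\<in>{1..n}. d i > 0"
    and dsym: "\<forall>i\<in>{1..n}. \<forall>j\<in>{1..n}. d i * of_int (c i j) = d j * of_int (c j i)"
    and dpd: "\<forall>x :: nat \<Rightarrow> real. (\<exists>i\<in>{1..n}. x i \<noteq> 0) \<longrightarrow>
           (\<Sum>i\<in>{1..n}. \<Sum>j\<in>{1..n}. x i * d i * of_int (c i j) * x j) > 0"
    using assms(1) unfolding simple_cartan_matrix_def by blast
  have gc: "generalized_cartan n c" using assms(1) unfolding simple_cartan_matrix_def by blast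
  have cii: "\<And>i. i \<in> {1..n} \<Longrightarrow> c i i = 2" using gc unfolding generalized_cartan_def by blast
  have cij: "\<And>i j. i \<in> {1..n} \<Longrightarrow> j \<in> {1..n} \<Longrightarrow> i \<noteq> j \<Longrightarrow> c i j \<le> 0"
    using gc unfolding generalized_cartan_def by blast
  have fin: "\<And>i. i \<in> {1..n} \<Longrightarrow> finite (rowset m i)"
    using assms(2) rowset_finite unfolding partition_tuple_def by blast
  have psz: "\<And>i. i \<in> {1..n} \<Longrightarrow> psize m i = (\<Sum>p\<in>rowset m i. fst p)"
    using assms(2) psize_eq unfolding partition_tuple_def by blast
  have dnz: "\<And>i. i \<in> {1..n} \<Longrightarrow> d i \<noteq> 0" using dpos by fastforce
  define S where "S = (\<lambda>i j. of_int (c i j) / d j)"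
  have Spd: "\<forall>z::nat\<Rightarrow>real. (\<exists>i\<in>{1..n}. z i \<noteq> 0) \<longrightarrow> (\<Sum>i\<in>{1..n}. \<Sum>j\<in>{1..n}. z i * S i j * z j) > 0"
  proof (intro allI impI)
    fix z :: "nat \<Rightarrow> real" assume "\<exists>i\<in>{1..n}. z i \<noteq> 0"
    then obtain i0 where i0: "i0 \<in> {1..n}" "z i0 \<noteq> 0" by blast
    have "d i0 > 0" using dpos i0(1) by blast
    then have "\<exists>i\<in>{1..n}. z i / d i \<noteq> 0" using i0 by (intro bexI[of _ i0]) auto
    then have "(\<Sum>i\<in>{1..n}. \<Sum>j\<in>{1..n}. (z i / d i) * d i * of_int (c i j) * (z j / d j)) > 0"
      using dpd[rule_format, of "\<lambda>i. z i / d i"] by blast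
    also have "(\<Sum>i\<in>{1..n}. \<Sum>j\<in>{1..n}. (z i / d i) * d i * of_int (c i j) * (z j / d j))
       = (\<Sum>i\<in>{1..n}. \<Sum>j\<in>{1..n}. z i * S i j * z j)"
      unfolding S_def by (intro sum.cong refl) (simp add: field_simps dnz)
    finally show "(\<Sum>i\<in>{1..n}. \<Sum>j\<in>{1..n}. z i * S i j * z j) > 0" .
  qed
  define X where "X = Sigma {1..n} (rowset m)"
  define x where "x = (\<lambda>e :: nat \<times> nat \<times> nat. d (fst e) * real (fst (snd e)))"
  have finX: "finite X" unfolding X_def using fin by (intro finite_SigmaI) auto
  have vX: "\<forall>e\<in>X. fst e \<in> {1..n}" unfolding X_def by auto
  have xX: "\<forall>e\<in>X. x e > 0" unfolding X_def x_def rowset_def using dpos by auto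
  have neX: "X \<noteq> {}"
  proof -
    obtain i a where "i \<in> {1..n}" "m i a \<noteq> 0" using assms(3) by blast
    moreover have "m i 0 = 0" using assms(2) calculation(1) unfolding partition_tuple_def by blast
    moreover have "a \<noteq> 0" using calculation by metis
    ultimately have "(i, (a, 1)) \<in> X" unfolding X_def rowset_def by auto
    then show ?thesis by auto
  qed
  have Qpos: "(\<Sum>e\<in>X. \<Sum>f\<in>X. S (fst e) (fst f) * min (x e) (x f)) > 0"
    using minform_pos[OF Spd finX vX xX] neX by blast
  define G where "G = (\<lambda>i j. \<Sum>p\<in>rowset m i. \<Sum>q\<in>rowset m j. S i j * min (d i * real (fst p)) (d j * real (fst q)))"
  have Q1: "(\<Sum>e\<in>X. \<Sum>f\<in>X. S (fst e) (fst f) * min (x e) (x f)) = (\<Sum>i\<in>{1..n}. \<Sum>j\<in>{1..n}. G i j)"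
  proof -
    have "(\<Sum>e\<in>X. \<Sum>f\<in>X. S (fst e) (fst f) * min (x e) (x f)) =
      (\<Sum>i\<in>{1..n}. \<Sum>p\<in>rowset m i. \<Sum>j\<in>{1..n}. \<Sum>q\<in>rowset m j. S i j * min (d i * real (fst p)) (d j * real (fst q)))"
    proof -
      have finS: "\<forall>a\<in>{1..n}. finite (rowset m a)" using fin by blast
      have e1: "\<And>h. (\<Sum>e\<in>X. h e) = (\<Sum>i\<in>{1..n}. \<Sum>p\<in>rowset m i. h (i,p))"
        unfolding X_def by (rule sum_Sigma'[OF _ finS]) simp
      show ?thesis by (simp only: e1) (simp add: x_def)
    qed
    also have "\<dots> = (\<Sum>i\<in>{1..n}. \<Sum>j\<in>{1..n}. G i j)"
      unfolding G_def by (intro sum.cong refl) (rule sum.swap)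
    finally show ?thesis .
  qed
  define M where "M = (\<lambda>i. \<Sum>p\<in>rowset m i. \<Sum>q\<in>rowset m i. min (fst p) (fst q))"
  define cr where "cr = (\<lambda>i j. \<Sum>p\<in>rowset m i. \<Sum>q\<in>rowset m j.
            min (\<bar>c j i\<bar> * int (fst p)) (\<bar>c i j\<bar> * int (fst q)))"
  have Gd: "G i i = 2 * real (M i)" if i: "i \<in> {1..n}" for i
  proof -
    have "G i i = (\<Sum>p\<in>rowset m i. \<Sum>q\<in>rowset m i. 2 * real (min (fst p) (fst q)))"
    proof -
      have di: "d i > 0" using dpos i by blast
      have "\<And>a b :: nat. min (d i * real a) (d i * real b) = d i * real (min a b)"
        using di by (auto simp: min_def mult_le_cancel_left_pos)
      then show ?thesis unfolding G_def S_def using cii[OF i] di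
        by (intro sum.cong refl) simp
    qed
    then show ?thesis unfolding M_def by (simp add: sum_distrib_left)
  qed
  have Go: "G i j + G j i = - 2 * real_of_int (cr i j)" if i: "i \<in> {1..n}" and j: "j \<in> {i<..n}" for i j
  proof -
    have j1: "j \<in> {1..n}" "i \<noteq> j" using i j by auto
    have h1: "d i * of_int (c i j) = d j * of_int (c j i)" using dsym i j1 by blast
    have dij: "d i > 0" "d j > 0" using dpos i j1 by blast+
    have ci: "real_of_int (c i j) \<le> 0" "real_of_int (c j i) \<le> 0"
      using cij[OF i j1(1) j1(2)] cij[OF j1(1) i j1(2)[symmetric]] by simp_all
    have p1: "(real_of_int (c i j) / d j) * min (d i * real a) (d j * real b) =
        - real_of_int (min (\<bar>c j i\<bar> * int a) (\<bar>c i j\<bar> * int b))" for a b :: nat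
      using pt[OF dij(1) dij(2) h1 ci(1) ci(2), of "real a" "real b"] by (simp add: of_int_min_real)
    have p2: "(real_of_int (c j i) / d i) * min (d j * real b) (d i * real a) =
        - real_of_int (min (\<bar>c j i\<bar> * int a) (\<bar>c i j\<bar> * int b))" for a b :: nat
      using pt[OF dij(2) dij(1) h1[symmetric] ci(2) ci(1), of "real b" "real a"] by (simp add: of_int_min_real min.commute)
    have "G i j = (\<Sum>p\<in>rowset m i. \<Sum>q\<in>rowset m j. - real_of_int (min (\<bar>c j i\<bar> * int (fst p)) (\<bar>c i j\<bar> * int (fst q))))"
      unfolding G_def S_def using p1 by simp
    moreover have "G j i = (\<Sum>q\<in>rowset m j. \<Sum>p\<in>rowset m i. - real_of_int (min (\<bar>c j i\<bar> * int (fst p)) (\<bar>c i j\<bar> * int (fst q))))"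
      unfolding G_def S_def using p2 by simp
    moreover have "(\<Sum>q\<in>rowset m j. \<Sum>p\<in>rowset m i. - real_of_int (min (\<bar>c j i\<bar> * int (fst p)) (\<bar>c i j\<bar> * int (fst q))))
       = (\<Sum>p\<in>rowset m i. \<Sum>q\<in>rowset m j. - real_of_int (min (\<bar>c j i\<bar> * int (fst p)) (\<bar>c i j\<bar> * int (fst q))))"
      by (rule sum.swap)
    ultimately show ?thesis unfolding cr_def by (simp add: sum_negf)
  qed
  have "(\<Sum>i\<in>{1..n}. \<Sum>j\<in>{1..n}. G i j) = (\<Sum>i\<in>{1..n}. G i i) + (\<Sum>i\<in>{1..n}. \<Sum>j\<in>{i<..n}. G i j + G j i)"
    by (rule pair_split)
  also have "\<dots> = (\<Sum>i\<in>{1..n}. 2 * real (M i)) + (\<Sum>i\<in>{1..n}. \<Sum>j\<in>{i<..n}. - 2 * real_of_int (cr i j))"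
    using Gd Go by (intro arg_cong2[where f="(+)"] sum.cong refl) auto
  also have "\<dots> = 2 * real_of_int ((\<Sum>i\<in>{1..n}. int (M i)) - (\<Sum>i\<in>{1..n}. \<Sum>j\<in>{i<..n}. cr i j))"
    by (simp add: sum_distrib_left sum_negf)
  finally have Q2: "(\<Sum>i\<in>{1..n}. \<Sum>j\<in>{1..n}. G i j) = 2 * real_of_int ((\<Sum>i\<in>{1..n}. int (M i)) - (\<Sum>i\<in>{1..n}. \<Sum>j\<in>{i<..n}. cr i j))" .
  define A where "A = (\<lambda>i. \<Sum>pq\<in>{(p, q). p \<in> rowset m i \<and> q \<in> rowset m i \<and> lex_less p q}.
            min (fst (fst pq)) (fst (snd pq)))"
  have Mi: "M i = 2 * A i + psize m i" if i: "i \<in> {1..n}" for i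
    unfolding M_def A_def using diag[OF fin[OF i]] psz[OF i] by simp
  have PF0: "Pfun n c m = 2 * (\<Sum>i\<in>{1..n}. int (A i)) - (\<Sum>i\<in>{1..n}. \<Sum>j\<in>{i<..n}. cr i j)"
    unfolding Pfun_def A_def cr_def by simp
  have PF1: "(\<Sum>i\<in>{1..n}. int (M i)) = 2 * (\<Sum>i\<in>{1..n}. int (A i)) + (\<Sum>i\<in>{1..n}. int (psize m i))"
  proof -
    have "(\<Sum>i\<in>{1..n}. int (M i)) = (\<Sum>i\<in>{1..n}. 2 * int (A i) + int (psize m i))"
      using Mi by (intro sum.cong refl) simp
    then show ?thesis by (simp add: sum.distrib sum_distrib_left)
  qed
  have PF: "Pfun n c m + (\<Sum>i\<in>{1..n}. int (psize m i)) = (\<Sum>i\<in>{1..n}. int (M i)) - (\<Sum>i\<in>{1..n}. \<Sum>j\<in>{i<..n}. cr i j)"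
    unfolding PF0 PF1 by simp
  have "real_of_int (Pfun n c m + (\<Sum>i\<in>{1..n}. int (psize m i))) > 0"
    using Qpos Q1 Q2 PF by simp
  then have "Pfun n c m + (\<Sum>i\<in>{1..n}. int (psize m i)) > 0"
    by (simp only: of_int_0_less_iff)
  then show ?thesis by linarith
qed
end
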